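(* Let $\phi\in L^\infty$. The (compressed) slant Toeplitz operator $B_\phi$ on $H^2$ is a slant H-Toeplitz operator (i.e. $B_\phi=V_\psi$ for some $\psi\in L^\infty$) if and only if $\phi=0$.
   Context: $L^2=L^2(\mathbb{T})$ with orthonormal basis $e_n(z)=z^n$, $n\in\mathbb{Z}$; $H^2$ is the closed span of $\{e_n\}_{n\ge0}$, $P:L^2\to H^2$ the orthogonal projection, $M_\phi$ multiplication by $\phi$. $W:L^2\to L^2$: $We_n=e_{n/2}$ for $n$ even, $0$ for $n$ odd. $B_\phi=PWM_\phi|_{H^2}$ (which equals $WT_\phi$, $T_\phi=PM_\phi|_{H^2}$). $K:H^2\to L^2$: $Ke_{2n}=e_n$, $Ke_{2n+1}=e_{-n-1}$ ($n\ge0$). The slant H-Toeplitz operator with symbol $\psi\in L^\infty$ is $V_\psi=WPM_\psi K:H^2\to H^2$. *)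

theory Defs
  imports "HOL-Analysis.Analysis"
begin

text \<open>The unit circle is parametrised by t in [0, 2 pi] via cis t, with normalised
Lebesgue measure. A symbol is a function phi :: complex => complex, considered on the circle.\<close>

definition circ_meas :: "real measure" where
  "circ_meas = lebesgue_on {0..2*pi}"

definition Linf :: "(complex \<Rightarrow> complex) \<Rightarrow> bool" where
  "Linf \<phi> \<longleftrightarrow> (\<lambda>t. \<phi> (cis t)) \<in> borel_measurable circ_meas
      \<and> (\<exists>C. AE t in circ_meas. norm (\<phi> (cis t)) \<le> C)"

definition fourier :: "(complex \<Rightarrow> complex) \<Rightarrow> int \<Rightarrow> complex" where
  "fourier \<phi> n = complex_of_real (1 / (2*pi)) *
      integral\<^sup>L circ_meas (\<lambda>t. \<phi> (cis t) * cis (- (of_int n * t)))"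

text \<open>L^2 is identified (via the orthonormal basis e_n) with square-summable coefficient
sequences; H^2 consists of those with vanishing negative coefficients.\<close>
definition L2 :: "(int \<Rightarrow> complex) set" where
  "L2 = {c. (\<lambda>n. (norm (c n))\<^sup>2) summable_on UNIV}"

definition H2 :: "(int \<Rightarrow> complex) set" where
  "H2 = {c \<in> L2. \<forall>n<0. c n = 0}"

text \<open>Multiplication by phi in coefficient form: (phi f)^(n) = sum_k phi^(n-k) f^(k).\<close>
definition Mult :: "(complex \<Rightarrow> complex) \<Rightarrow> (int \<Rightarrow> complex) \<Rightarrow> (int \<Rightarrow> complex)" where
  "Mult \<phi> c = (\<lambda>n. \<Sum>\<^sub>\<infinity>k. fourier \<phi> (n - k) * c k)"

definition Proj :: "(int \<Rightarrow> complex) \<Rightarrow> (int \<Rightarrow> complex)" where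
  "Proj c = (\<lambda>n. if n \<ge> 0 then c n else 0)"

text \<open>W e_n = e_{n/2} (n even), 0 (n odd).\<close>
definition Wop :: "(int \<Rightarrow> complex) \<Rightarrow> (int \<Rightarrow> complex)" where
  "Wop c = (\<lambda>n. c (2*n))"

text \<open>K e_{2n} = e_n, K e_{2n+1} = e_{-n-1} (n >= 0).\<close>
definition Kop :: "(int \<Rightarrow> complex) \<Rightarrow> (int \<Rightarrow> complex)" where
  "Kop c = (\<lambda>n. if n \<ge> 0 then c (2*n) else c (-2*n - 1))"

definition slantB :: "(complex \<Rightarrow> complex) \<Rightarrow> (int \<Rightarrow> complex) \<Rightarrow> (int \<Rightarrow> complex)" where
  "slantB \<phi> c = Proj (Wop (Mult \<phi> c))"

definition slantHV :: "(complex \<Rightarrow> complex) \<Rightarrow> (int \<Rightarrow> complex) \<Rightarrow> (int \<Rightarrow> complex)" where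
  "slantHV \<psi> c = Wop (Proj (Mult \<psi> (Kop c)))"

end

theory Submission
  imports Defs
begin

lemma int_mult_bdd:
  fixes f g :: "real \<Rightarrow> complex" and M :: "real measure"
  assumes "integrable M f" "g \<in> borel_measurable M" "\<And>t. norm (g t) \<le> B"
  shows "integrable M (\<lambda>t. f t * g t)"
proof -
  have B: "B \<ge> 0" using assms(3)[of 0] norm_ge_zero order_trans by blast
  have i1: "integrable M (\<lambda>t. B *\<^sub>R f t)" using assms(1) by simp
  have "f \<in> borel_measurable M" using assms(1) by simp
  then have m: "(\<lambda>t. f t * g t) \<in> borel_measurable M" using assms(2) by simp
  have ae: "AE x in M. norm (f x * g x) \<le> norm (B *\<^sub>R f x)"
    using B assms(3) by (intro AE_I2) (metis mult.commute mult_left_mono norm_ge_zero norm_mult norm_scaleR abs_of_nonneg)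
  show ?thesis using Bochner_Integration.integrable_bound[OF i1 m ae] .
qed

inductive trigp :: "(real \<Rightarrow> complex) \<Rightarrow> bool" where
  tb: "trigp (\<lambda>t. c * cis (of_int k * t))"
| ta: "trigp f \<Longrightarrow> trigp g \<Longrightarrow> trigp (\<lambda>t. f t + g t)"

lemma trigp_cont: "trigp T \<Longrightarrow> continuous_on UNIV T"
proof (induction rule: trigp.induct)
  case (tb c k)
  have "continuous_on UNIV (\<lambda>t. c * exp (\<i> * complex_of_real (of_int k * t)))"
    by (intro continuous_intros)
  then show ?case by (simp add: cis_conv_exp)
next
  case (ta f g)
  then show ?case by (intro continuous_intros)
qed

lemma trigp_bdd: "trigp T \<Longrightarrow> \<exists>B. \<forall>t. norm (T t) \<le> B"
proof (induction rule: trigp.induct)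
  case (tb c k)
  then show ?case by (auto simp: norm_mult)
next
  case (ta f g)
  then obtain B1 B2 where "\<forall>t. norm (f t) \<le> B1" "\<forall>t. norm (g t) \<le> B2" by blast
  then have "\<forall>t. norm (f t + g t) \<le> B1 + B2" by (meson add_mono norm_triangle_ineq order_trans)
  then show ?case by blast
qed

lemma trigp_mult: "trigp f \<Longrightarrow> trigp g \<Longrightarrow> trigp (\<lambda>t. f t * g t)"
proof (induction f rule: trigp.induct)
  case (tb c k)
  from tb show ?case
  proof (induction g rule: trigp.induct)
    case (tb d j)
    have "(\<lambda>t. c * cis (of_int k * t) * (d * cis (of_int j * t))) = (\<lambda>t. (c*d) * cis (of_int (k+j) * t))"
      by (auto simp: cis_mult algebra_simps)
    then show ?case using trigp.tb[of "c*d" "k+j"] by simp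
  next
    case (ta f g)
    then show ?case by (simp add: distrib_left trigp.ta)
  qed
next
  case (ta f1 f2)
  then show ?case by (simp add: distrib_right trigp.ta)
qed

lemma trigp_const: "trigp (\<lambda>t. c)"
  using trigp.tb[of c 0] by simp

lemma trigp_rpoly: "real_polynomial_function p \<Longrightarrow> trigp (\<lambda>t. complex_of_real (p (cis t)))"
proof (induction rule: real_polynomial_function.induct)
  case (linear p)
  then interpret bounded_linear p .
  have "p z = Re z * p 1 + Im z * p \<i>" for z
  proof -
    have "z = Re z *\<^sub>R 1 + Im z *\<^sub>R \<i>" by (simp add: complex_eq_iff)
    then have "p z = p (Re z *\<^sub>R 1 + Im z *\<^sub>R \<i>)" by simp
    also have "\<dots> = Re z * p 1 + Im z * p \<i>" by (simp add: add scale)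
    finally show ?thesis .
  qed
  note pz = this
  have eq: "(\<lambda>t. complex_of_real (p (cis t))) = (\<lambda>t. 
     (p 1 / 2) * cis (of_int 1 * t) + (p 1 / 2) * cis (of_int (-1) * t)
     + ((p \<i> / (2*\<i>)) * cis (of_int 1 * t) + (- (p \<i> / (2*\<i>))) * cis (of_int (-1) * t)))"
  proof
    fix t :: real
    have c1: "cis t + cis (-t) = 2 * of_real (cos t)" by (simp add: complex_eq_iff)
    have c2: "cis t - cis (-t) = 2 * \<i> * of_real (sin t)" by (simp add: complex_eq_iff)
    have "(p 1 / 2) * cis (of_int 1 * t) + (p 1 / 2) * cis (of_int (-1) * t)
     + ((p \<i> / (2*\<i>)) * cis (of_int 1 * t) + (- (p \<i> / (2*\<i>))) * cis (of_int (-1) * t))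
      = (p 1 / 2) * (cis t + cis (-t)) + (p \<i> / (2*\<i>)) * (cis t - cis (-t))"
      by (simp only: of_int_1 of_int_minus mult_1 mult_minus_left) (simp add: algebra_simps add_divide_distrib diff_divide_distrib)
    also have "\<dots> = of_real (p 1) * of_real (cos t) + of_real (p \<i>) * of_real (sin t)"
      unfolding c1 c2 by (simp add: field_simps)
    also have "\<dots> = complex_of_real (p (cis t))"
      using pz[of "cis t"] by simp
    finally show "complex_of_real (p (cis t)) = (p 1 / 2) * cis (of_int 1 * t) + (p 1 / 2) * cis (of_int (-1) * t)
     + ((p \<i> / (2*\<i>)) * cis (of_int 1 * t) + (- (p \<i> / (2*\<i>))) * cis (of_int (-1) * t))" by simp
  qed
  show ?case unfolding eq by (intro trigp.ta trigp.tb)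
next
  case (const c)
  then show ?case using trigp_const by simp
next
  case (add f g)
  then show ?case by (simp add: trigp.ta)
next
  case (mult f g)
  then show ?case by (simp add: trigp_mult)
qed


abbreviation "LM \<equiv> lebesgue_on {0..2*pi}"

lemma cont_meas: "continuous_on UNIV (T :: real \<Rightarrow> 'b::{real_normed_vector, second_countable_topology}) \<Longrightarrow> T \<in> borel_measurable LM"
  by (rule continuous_imp_measurable_on_sets_lebesgue) (auto intro: continuous_on_subset)

lemma int_trig: "integrable LM f \<Longrightarrow> trigp T \<Longrightarrow> integrable LM (\<lambda>t. f t * T t)"
  using trigp_bdd[of T] trigp_cont[of T] cont_meas[of T] int_mult_bdd[of LM f T] by blast

lemma trig_orth:
  assumes f: "integrable LM f"
    and orth: "\<And>n::int. (\<integral>t. f t * cis (- (of_int n * t)) \<partial>LM) = 0"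
    and T: "trigp T"
  shows "(\<integral>t. f t * T t \<partial>LM) = 0"
  using T
proof (induction rule: trigp.induct)
  case (tb c k)
  have "(\<lambda>t. f t * (c * cis (of_int k * t))) = (\<lambda>t. c * (f t * cis (- (of_int (-k) * t))))"
    by (auto simp: algebra_simps)
  then show ?case using orth[of "-k"] by simp
next
  case (ta g1 g2)
  have "(\<integral>t. f t * (g1 t + g2 t) \<partial>LM) = (\<integral>t. f t * g1 t + f t * g2 t \<partial>LM)"
    by (simp add: distrib_left)
  also have "\<dots> = (\<integral>t. f t * g1 t \<partial>LM) + (\<integral>t. f t * g2 t \<partial>LM)"
    using int_trig[OF f ta.hyps(1)] int_trig[OF f ta.hyps(2)] by (rule Bochner_Integration.integral_add)
  finally show ?case using ta.IH by simp
qed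

lemma cont_orth:
  fixes h :: "complex \<Rightarrow> real"
  assumes f: "integrable LM f"
    and orth: "\<And>n::int. (\<integral>t. f t * cis (- (of_int n * t)) \<partial>LM) = 0"
    and hc: "continuous_on UNIV h"
  shows "(\<integral>t. f t * complex_of_real (h (cis t)) \<partial>LM) = 0"
proof -
  define X where "X = (\<integral>t. f t * complex_of_real (h (cis t)) \<partial>LM)"
  define K where "K = (\<integral>t. norm (f t) \<partial>LM)"
  have K0: "K \<ge> 0" unfolding K_def by simp
  have hcc: "continuous_on UNIV (\<lambda>t. complex_of_real (h (cis t)))"
    by (intro continuous_intros continuous_on_compose2[OF hc]) auto
  have bnd: "norm X \<le> e * K" if e: "e > 0" for e
  proof -
    have "continuous_on (sphere 0 1) h" using hc continuous_on_subset by blast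
    then obtain g where g: "polynomial_function g" "\<forall>x\<in>sphere 0 1. norm (h x - g x) < e"
      using Stone_Weierstrass_polynomial_function[OF compact_sphere _ e] by blast
    have Tg: "trigp (\<lambda>t. complex_of_real (g (cis t)))"
      using g(1) real_polynomial_function_eq trigp_rpoly by blast
    obtain Bg where Bg: "\<And>t. norm (complex_of_real (g (cis t))) \<le> Bg" using trigp_bdd[OF Tg] by blast
    have close: "norm (complex_of_real (h (cis t)) - complex_of_real (g (cis t))) \<le> e" for t
    proof -
      have "cis t \<in> sphere 0 1" by simp
      then have "norm (h (cis t) - g (cis t)) < e" using g(2) by blast
      then show ?thesis by (simp flip: of_real_diff)
    qed
    have hb: "norm (complex_of_real (h (cis t))) \<le> Bg + e" for t
      using Bg[of t] close[of t] norm_triangle_ineq2[of "complex_of_real (h (cis t))" "complex_of_real (g (cis t))"]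
      by linarith
    have ih: "integrable LM (\<lambda>t. f t * complex_of_real (h (cis t)))"
      using int_mult_bdd[OF f cont_meas[OF hcc] hb] .
    have ig: "integrable LM (\<lambda>t. f t * complex_of_real (g (cis t)))"
      using int_trig[OF f Tg] .
    have zg: "(\<integral>t. f t * complex_of_real (g (cis t)) \<partial>LM) = 0"
      using trig_orth[OF f orth Tg] .
    have "X = (\<integral>t. f t * complex_of_real (h (cis t)) - f t * complex_of_real (g (cis t)) \<partial>LM)"
      unfolding X_def using Bochner_Integration.integral_diff[OF ih ig] zg by simp
    also have "\<dots> = (\<integral>t. f t * (complex_of_real (h (cis t)) - complex_of_real (g (cis t))) \<partial>LM)"
      by (simp add: algebra_simps)
    finally have Xe: "X = \<dots>" .
    have idf: "integrable LM (\<lambda>t. f t * (complex_of_real (h (cis t)) - complex_of_real (g (cis t))))"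
      using Bochner_Integration.integrable_diff[OF ih ig] by (simp add: algebra_simps)
    have "norm X \<le> (\<integral>t. norm (f t * (complex_of_real (h (cis t)) - complex_of_real (g (cis t)))) \<partial>LM)"
      unfolding Xe by (rule Bochner_Integration.integral_norm_bound)
    also have "\<dots> \<le> (\<integral>t. norm (f t) * e \<partial>LM)"
    proof (rule Bochner_Integration.integral_mono)
      show "integrable LM (\<lambda>t. norm (f t * (complex_of_real (h (cis t)) - complex_of_real (g (cis t)))))"
        using idf by simp
      show "integrable LM (\<lambda>t. norm (f t) * e)" using f by simp
      show "norm (f t * (complex_of_real (h (cis t)) - complex_of_real (g (cis t)))) \<le> norm (f t) * e" for t
        unfolding norm_mult by (rule mult_left_mono[OF close]) simp
    qed
    also have "\<dots> = e * K" unfolding K_def by simp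
    finally show ?thesis .
  qed
  show ?thesis
  proof (rule ccontr)
    assume "\<not> ?thesis"
    then have nX: "norm X > 0" unfolding X_def by simp
    define e where "e = norm X / (K + 1)"
    have e0: "e > 0" unfolding e_def using nX K0 by simp
    have "norm X \<le> e * K" using bnd[OF e0] .
    also have "\<dots> < e * (K + 1)" using e0 by simp
    also have "\<dots> = norm X" unfolding e_def using K0 by simp
    finally show False by simp
  qed
qed


lemma arc_set:
  fixes x t :: real
  assumes "0 \<le> x" "x < 2*pi" "0 \<le> t" "t < 2*pi"
  shows "cos (t - (pi + x/2)) > cos (pi - x/2) \<longleftrightarrow> x < t"
proof
  assume "x < t"
  then have a: "\<bar>t - (pi + x/2)\<bar> < pi - x/2" using assms by auto
  have "cos (pi - x/2) < cos \<bar>t - (pi + x/2)\<bar>"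
    by (rule cos_monotone_0_pi) (use a assms in auto)
  then show "cos (t - (pi + x/2)) > cos (pi - x/2)" by simp
next
  assume c: "cos (t - (pi + x/2)) > cos (pi - x/2)"
  show "x < t"
  proof (rule ccontr)
    assume "\<not> x < t"
    then have tx: "t \<le> x" by simp
    show False
    proof (cases "t - (pi + x/2) \<ge> -pi")
      case True
      have "cos \<bar>t - (pi + x/2)\<bar> \<le> cos (pi - x/2)"
        by (rule cos_monotone_0_pi_le) (use True tx assms in auto)
      then show False using c by simp
    next
      case False
      have "cos (t - (pi + x/2) + 2*pi) \<le> cos (pi - x/2)"
        by (rule cos_monotone_0_pi_le) (use False tx assms in auto)
      moreover have "cos (t - (pi + x/2)) = cos (t - (pi + x/2) + 2*pi)" by (simp only: cos_periodic)
      ultimately show False using c by linarith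
    qed
  qed
qed

lemma AE_LM_ne: "AE t in LM. t \<noteq> c"
proof -
  have "AE t in lebesgue. t \<noteq> c" using AE_completion[OF AE_lborel_singleton] .
  then show ?thesis by (subst AE_restrict_space_iff) (auto elim!: eventually_mono)
qed

lemma ioi_meas: "(indicator {x<..} :: real \<Rightarrow> 'a::{zero_neq_one, t1_space}) \<in> borel_measurable LM"
proof -
  have "{x<..} \<inter> space LM \<in> sets LM" by (simp add: sets_restrict_space_iff)
  then show ?thesis by (rule borel_measurable_indicator_iff[THEN iffD2])
qed

lemma ioi_orth:
  assumes f: "integrable LM f"
    and orth: "\<And>n::int. (\<integral>t. f t * cis (- (of_int n * t)) \<partial>LM) = 0"
  shows "(\<integral>t. f t * indicator {x<..} t \<partial>LM) = 0"
proof -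
  consider "x < 0" | "x \<ge> 2*pi" | "0 \<le> x" "x < 2*pi" by linarith
  then show ?thesis
  proof cases
    case 1
    have "(\<integral>t. f t * indicator {x<..} t \<partial>LM) = (\<integral>t. f t * cis (- (of_int 0 * t)) \<partial>LM)"
      by (rule Bochner_Integration.integral_cong) (use 1 in auto)
    then show ?thesis using orth[of 0] by simp
  next
    case 2
    have "(\<integral>t. f t * indicator {x<..} t \<partial>LM) = (\<integral>t. 0 \<partial>LM)"
      by (rule Bochner_Integration.integral_cong) (use 2 in auto)
    then show ?thesis by simp
  next
    case 3
    define th where "th = pi + x/2"
    define c where "c = cos (pi - x/2)"
    define h where "h = (\<lambda>(n::nat) (z::complex). max 0 (min 1 (real n * (Re (z * cnj (cis th)) - c))))"
    have hcis: "h n (cis t) = max 0 (min 1 (real n * (cos (t - th) - c)))" for n t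
      unfolding h_def by (simp add: cis_cnj cis_mult)
    have hc: "continuous_on UNIV (h n)" for n
      unfolding h_def by (intro continuous_intros)
    have h0: "(\<integral>t. f t * complex_of_real (h n (cis t)) \<partial>LM) = 0" for n
      using cont_orth[OF f orth hc] .
    have fm: "f \<in> borel_measurable LM" using f by simp
    have sm: "(\<lambda>t. f t * complex_of_real (h n (cis t))) \<in> borel_measurable LM" for n
    proof -
      have "continuous_on UNIV (\<lambda>t. complex_of_real (h n (cis t)))"
        by (intro continuous_intros continuous_on_compose2[OF hc]) auto
      then have "(\<lambda>t. complex_of_real (h n (cis t))) \<in> borel_measurable LM" by (rule cont_meas)
      then show ?thesis using fm by simp
    qed
    have Fm: "(\<lambda>t. f t * indicator {x<..} t) \<in> borel_measurable LM"
    proof -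
      have im0: "(indicator {x<..} :: real \<Rightarrow> complex) \<in> borel_measurable LM" by (rule ioi_meas)
      have im: "(\<lambda>t. indicator {x<..} t :: complex) \<in> borel_measurable LM" using im0 by (simp add: eta_contract_eq)
      show ?thesis using fm im by simp
    qed
    have lim: "AE t in LM. (\<lambda>n. f t * complex_of_real (h n (cis t))) \<longlonglongrightarrow> f t * indicator {x<..} t"
      using AE_LM_ne[of "2*pi"]
    proof (rule eventually_mono[OF AE_conjI[OF _ AE_space]])
      fix t assume "t \<noteq> 2*pi \<and> t \<in> space LM"
      then have t: "0 \<le> t" "t < 2*pi" by auto
      have key: "cos (t - th) > c \<longleftrightarrow> x < t"
        unfolding th_def c_def using arc_set[OF 3 t] .
      show "(\<lambda>n. f t * complex_of_real (h n (cis t))) \<longlonglongrightarrow> f t * indicator {x<..} t"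
      proof (cases "x < t")
        case True
        then have d: "cos (t - th) - c > 0" using key by simp
        obtain N :: nat where N: "1 < real N * (cos (t - th) - c)"
          using ex_less_of_nat_mult[OF d] by blast
        have "eventually (\<lambda>n. f t * complex_of_real (h n (cis t)) = f t * indicator {x<..} t) sequentially"
          unfolding eventually_sequentially
        proof (intro exI allI impI)
          fix n assume "N \<le> n"
          then have "real N * (cos (t - th) - c) \<le> real n * (cos (t - th) - c)"
            using d by (intro mult_right_mono) auto
          then have "h n (cis t) = 1" using N unfolding hcis by simp
          then show "f t * complex_of_real (h n (cis t)) = f t * indicator {x<..} t" using True by simp
        qed
        then show ?thesis by (rule tendsto_eventually)
      next
        case False
        then have d: "cos (t - th) - c \<le> 0" using key by simp
        have "h n (cis t) = 0" for n
          unfolding hcis using mult_nonneg_nonpos[OF _ d, of "real n"] by simp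
        then show ?thesis using False by simp
      qed
    qed
    have bound: "AE t in LM. norm (f t * complex_of_real (h n (cis t))) \<le> norm (f t)" for n
    proof (rule AE_I2)
      fix t
      have "\<bar>h n (cis t)\<bar> \<le> 1" unfolding h_def by simp
      then show "norm (f t * complex_of_real (h n (cis t))) \<le> norm (f t)"
        unfolding norm_mult by (simp add: mult_left_le)
    qed
    have "(\<lambda>n. \<integral>t. f t * complex_of_real (h n (cis t)) \<partial>LM) \<longlonglongrightarrow> (\<integral>t. f t * indicator {x<..} t \<partial>LM)"
      by (rule integral_dominated_convergence[OF Fm sm _ lim bound]) (use f in simp)
    then have "(\<lambda>n. 0) \<longlonglongrightarrow> (\<integral>t. f t * indicator {x<..} t \<partial>LM)" using h0 by simp
    then show ?thesis using LIMSEQ_unique tendsto_const by metis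
  qed
qed


lemma sets_borel_Ioi: "sets (borel :: real measure) = sigma_sets UNIV (range greaterThan)"
  by (subst borel_Ioi) (simp add: sets_measure_of)

lemma real_density:
  fixes g :: "real \<Rightarrow> real"
  assumes gi: "integrable LM g"
    and z: "\<And>x. (\<integral>t. g t * indicator {x<..} t \<partial>LM) = 0"
  shows "AE t in LM. g t = 0"
proof -
  define G where "G t = indicator {0..2*pi} t * g t" for t
  have sp: "{0..2*pi} \<inter> space lebesgue \<in> sets lebesgue" by simp
  have GL: "integrable lebesgue G"
    using gi unfolding integrable_restrict_space[OF sp] G_def by simp
  then have Gm: "G \<in> borel_measurable lebesgue" by simp
  obtain G' where G'm: "G' \<in> borel_measurable lborel" and GG': "AE x in lborel. G x = G' x"
    using completion_ex_borel_measurable_real[OF Gm] by blast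
  have GG'L: "AE x in lebesgue. G x = G' x" using AE_completion[OF GG'] .
  have G'mL: "G' \<in> borel_measurable lebesgue" using measurable_completion[OF G'm] .
  have G'L: "integrable lebesgue G'" using integrable_cong_AE[OF Gm G'mL GG'L] GL by simp
  have G'i: "integrable lborel G'" using G'L integrable_completion[OF G'm] by simp
  have chain: "set_lebesgue_integral lborel A G' = (\<integral>t. g t * indicator A t \<partial>LM)"
    if A: "A \<in> sets borel" for A
  proof -
    have Am: "(\<lambda>t. indicator A t *\<^sub>R G' t) \<in> borel_measurable lborel"
      using G'm A by (simp add: borel_measurable_indicator)
    have "set_lebesgue_integral lborel A G' = (\<integral>t. indicator A t *\<^sub>R G' t \<partial>lebesgue)"
      unfolding set_lebesgue_integral_def using integral_completion[OF Am] by simp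
    also have "\<dots> = (\<integral>t. indicator A t *\<^sub>R G t \<partial>lebesgue)"
    proof (rule integral_cong_AE)
      show "(\<lambda>t. indicator A t *\<^sub>R G' t) \<in> borel_measurable lebesgue"
        using measurable_completion[OF Am] by simp
      show "(\<lambda>t. indicator A t *\<^sub>R G t) \<in> borel_measurable lebesgue"
      proof -
      have "A \<in> sets lebesgue" using A by (intro sets_completionI_sets) simp
      then have "(\<lambda>t. indicator A t :: real) \<in> borel_measurable lebesgue" by (simp add: borel_measurable_indicator)
      then show ?thesis using Gm by simp
    qed
      show "AE t in lebesgue. indicator A t *\<^sub>R G' t = indicator A t *\<^sub>R G t"
        using GG'L by (auto elim!: eventually_mono)
    qed
    also have "\<dots> = (\<integral>t. indicator {0..2*pi} t *\<^sub>R (g t * indicator A t) \<partial>lebesgue)"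
      unfolding G_def by (simp add: algebra_simps)
    also have "\<dots> = (\<integral>t. g t * indicator A t \<partial>LM)"
      using integral_restrict_space[OF sp, of "\<lambda>t. g t * indicator A t"] by simp
    finally show ?thesis .
  qed
  have PU: "set_lebesgue_integral lborel UNIV G' = 0"
  proof -
    have "set_lebesgue_integral lborel UNIV G' = (\<integral>t. g t * indicator UNIV t \<partial>LM)"
      using chain[of UNIV] by simp
    also have "\<dots> = (\<integral>t. g t * indicator {-1<..} t \<partial>LM)"
      by (rule Bochner_Integration.integral_cong) auto
    finally show ?thesis using z[of "-1"] by simp
  qed
  have sint: "set_integrable lborel A G'" if "A \<in> sets borel" for A
    unfolding set_integrable_def using integrable_mult_indicator[of A lborel G'] that G'i by simp
  have P: "set_lebesgue_integral lborel A G' = 0" if A: "A \<in> sets borel" for A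
  proof -
    have Asig: "A \<in> sigma_sets UNIV (range greaterThan)" using A sets_borel_Ioi by simp
    have Ist: "Int_stable (range greaterThan :: real set set)"
      unfolding Int_stable_def
    proof (intro ballI)
      fix A B :: "real set" assume "A \<in> range greaterThan" "B \<in> range greaterThan"
      then obtain a b where "A = {a<..}" "B = {b<..}" by auto
      then have "A \<inter> B = {max a b<..}" by auto
      then show "A \<inter> B \<in> range greaterThan" by auto
    qed
    show ?thesis
    proof (rule sigma_sets_induct_disjoint[OF Ist _ Asig, where P="\<lambda>A. set_lebesgue_integral lborel A G' = 0"])
      show "range greaterThan \<subseteq> Pow (UNIV :: real set)" by simp
    next
      fix A :: "real set" assume "A \<in> range greaterThan"
      then obtain x where "A = {x<..}" by auto
      then show "set_lebesgue_integral lborel A G' = 0" using chain[of A] z[of x] by simp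
    next
      show "set_lebesgue_integral lborel {} G' = 0" by (simp add: set_lebesgue_integral_def)
    next
      fix A :: "real set" assume compl: "A \<in> sigma_sets UNIV (range greaterThan)" "set_lebesgue_integral lborel A G' = 0"
      then have Ab: "A \<in> sets borel" using sets_borel_Ioi by simp
      have "set_lebesgue_integral lborel (UNIV - A) G' = (\<integral>t. G' t - indicator A t *\<^sub>R G' t \<partial>lborel)"
        unfolding set_lebesgue_integral_def
        by (rule Bochner_Integration.integral_cong) (auto split: split_indicator)
      also have "\<dots> = (\<integral>t. G' t \<partial>lborel) - set_lebesgue_integral lborel A G'"
        unfolding set_lebesgue_integral_def
        using G'i integrable_mult_indicator[of A lborel G'] Ab by simp
      also have "(\<integral>t. G' t \<partial>lborel) = set_lebesgue_integral lborel UNIV G'"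
        by (simp add: set_lebesgue_integral_def)
      finally show "set_lebesgue_integral lborel (UNIV - A) G' = 0" using PU compl(2) by simp
    next
      fix A :: "nat \<Rightarrow> real set"
      assume union: "disjoint_family A" "range A \<subseteq> sigma_sets UNIV (range greaterThan)"
        "\<And>i. set_lebesgue_integral lborel (A i) G' = 0"
      then have Ab: "A i \<in> sets borel" for i using sets_borel_Ioi by auto
      define B where "B n = (\<Union>i\<in>{0..<n}. A i)" for n
      have Bb: "B n \<in> sets lborel" for n unfolding B_def using Ab by auto
      have incB: "incseq B"
        unfolding incseq_def B_def
      proof (intro allI impI subsetI)
        fix m n x assume "m \<le> n" "x \<in> (\<Union>i\<in>{0..<m}. A i)"
        then obtain i where "i < m" "x \<in> A i" by auto
        then show "x \<in> (\<Union>i\<in>{0..<n}. A i)" using \<open>m \<le> n\<close> by auto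
      qed
      have UB: "(\<Union>n. B n) = (\<Union>i. A i)" unfolding B_def by (rule UN_UN_finite_eq)
      have Ub: "(\<Union>i. A i) \<in> sets borel" using Ab by auto
      have lim: "(\<lambda>n. set_lebesgue_integral lborel (B n) G') \<longlonglongrightarrow> set_lebesgue_integral lborel (\<Union>n. B n) G'"
        by (rule set_integral_cont_up[OF Bb incB]) (use sint[OF Ub] UB in simp)
      have B0: "set_lebesgue_integral lborel (B n) G' = 0" for n
      proof -
        have "set_lebesgue_integral lborel (B n) G' = (\<Sum>i\<in>{0..<n}. set_lebesgue_integral lborel (A i) G')"
          unfolding B_def
        proof (rule set_integral_finite_Union)
          show "disjoint_family_on A {0..<n}" using union(1) by (auto simp: disjoint_family_on_def)
          show "set_integrable lborel (A i) G'" for i using sint[OF Ab] .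
          show "A i \<in> sets lborel" for i using Ab by simp
        qed simp
        also have "\<dots> = 0" using union(3) by simp
        finally show ?thesis .
      qed
      have "(\<lambda>n. 0) \<longlonglongrightarrow> set_lebesgue_integral lborel (\<Union>i. A i) G'"
        using lim B0 UB by simp
      then show "set_lebesgue_integral lborel (\<Union>i. A i) G' = 0" using LIMSEQ_unique tendsto_const by metis
    qed
  qed
  have "AE x in lborel. G' x = 0"
    by (rule sigma_finite_measure.density_zero[OF sigma_finite_lborel G'i]) (use P in simp)
  then have "AE x in lborel. G x = 0" using GG' by (auto elim: eventually_mono)
  then have "AE x in lebesgue. G x = 0" by (rule AE_completion)
  then have "AE x in lebesgue. x \<in> {0..2*pi} \<longrightarrow> g x = 0"
    by (auto simp: G_def elim!: eventually_mono)
  then show ?thesis by (subst AE_restrict_space_iff[OF sp])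
qed


lemma uniqueness:
  assumes f: "integrable LM f"
    and orth: "\<And>n::int. (\<integral>t. f t * cis (- (of_int n * t)) \<partial>LM) = 0"
  shows "AE t in LM. f t = 0"
proof -
  have fi: "integrable LM (\<lambda>t. f t * indicator {x<..} t)" for x
  proof -
    have im0: "(indicator {x<..} :: real \<Rightarrow> complex) \<in> borel_measurable LM" by (rule ioi_meas)
    have "norm (indicator {x<..} t :: complex) \<le> 1" for t by (simp split: split_indicator)
    then show ?thesis using int_mult_bdd[OF f im0] by blast
  qed
  have z: "(\<integral>t. f t * indicator {x<..} t \<partial>LM) = 0" for x using ioi_orth[OF f orth] .
  have zr: "(\<integral>t. Re (f t) * indicator {x<..} t \<partial>LM) = 0" for x
  proof -
    have "(\<integral>t. Re (f t) * indicator {x<..} t \<partial>LM) = (\<integral>t. Re (f t * indicator {x<..} t) \<partial>LM)"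
      by (rule Bochner_Integration.integral_cong) (auto split: split_indicator)
    also have "\<dots> = Re (\<integral>t. f t * indicator {x<..} t \<partial>LM)" using integral_Re[OF fi] .
    finally show ?thesis using z by simp
  qed
  have zi: "(\<integral>t. Im (f t) * indicator {x<..} t \<partial>LM) = 0" for x
  proof -
    have "(\<integral>t. Im (f t) * indicator {x<..} t \<partial>LM) = (\<integral>t. Im (f t * indicator {x<..} t) \<partial>LM)"
      by (rule Bochner_Integration.integral_cong) (auto split: split_indicator)
    also have "\<dots> = Im (\<integral>t. f t * indicator {x<..} t \<partial>LM)" using integral_Im[OF fi] .
    finally show ?thesis using z by simp
  qed
  have "AE t in LM. Re (f t) = 0" by (rule real_density) (use f zr in auto)
  moreover have "AE t in LM. Im (f t) = 0" by (rule real_density) (use f zi in auto)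
  ultimately show ?thesis by eventually_elim (simp add: complex_eq_iff)
qed

lemma infsum_delta: "(\<Sum>\<^sub>\<infinity>k. F k * (if k = j then 1 else 0)) = (F j :: complex)"
proof -
  have "(\<Sum>\<^sub>\<infinity>k. F k * (if k = j then 1 else 0)) = (\<Sum>\<^sub>\<infinity>k\<in>{j}. F k * (if k = j then 1 else 0))"
    by (rule infsum_cong_neutral) auto
  then show ?thesis by simp
qed


definition ed :: "int \<Rightarrow> int \<Rightarrow> complex" where
  "ed j = (\<lambda>n. if n = j then 1 else 0)"

lemma ed_H2: "j \<ge> 0 \<Longrightarrow> ed j \<in> H2"
proof -
  assume j: "j \<ge> 0"
  have "(\<lambda>n. (norm (ed j n))\<^sup>2) summable_on UNIV \<longleftrightarrow> (\<lambda>n. (norm (ed j n))\<^sup>2) summable_on {j}"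
    by (rule summable_on_cong_neutral) (auto simp: ed_def)
  then show ?thesis using j unfolding H2_def L2_def by (auto simp: ed_def)
qed

lemma Mult_ed: "Mult a (ed j) = (\<lambda>n. fourier a (n - j))"
  unfolding Mult_def ed_def by (rule ext) (rule infsum_delta)

lemma Kop_even: "i \<ge> 0 \<Longrightarrow> Kop (ed (2*i)) = ed i"
  unfolding Kop_def ed_def by (auto simp: fun_eq_iff) presburger+

lemma Kop_odd: "i \<ge> 0 \<Longrightarrow> Kop (ed (2*i+1)) = ed (-i-1)"
  unfolding Kop_def ed_def by (auto simp: fun_eq_iff) presburger+

lemma slantB_ed: "n \<ge> 0 \<Longrightarrow> slantB a (ed j) n = fourier a (2*n - j)"
  unfolding slantB_def Proj_def Wop_def Mult_ed by simp

lemma slantHV_ed_even: "n \<ge> 0 \<Longrightarrow> i \<ge> 0 \<Longrightarrow> slantHV a (ed (2*i)) n = fourier a (2*n - i)"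
  unfolding slantHV_def Proj_def Wop_def Kop_even Mult_ed by simp

lemma slantHV_ed_odd: "n \<ge> 0 \<Longrightarrow> i \<ge> 0 \<Longrightarrow> slantHV a (ed (2*i+1)) n = fourier a (2*n - (-i-1))"
  unfolding slantHV_def Proj_def Wop_def Kop_odd Mult_ed by simp

theorem mainTheorem12:
  fixes \<phi> :: "complex \<Rightarrow> complex"
  assumes "Linf \<phi>"
  shows "(\<exists>\<psi>. Linf \<psi> \<and> (\<forall>c\<in>H2. slantB \<phi> c = slantHV \<psi> c))
         \<longleftrightarrow> (AE t in circ_meas. \<phi> (cis t) = 0)"
proof
  assume "\<exists>\<psi>. Linf \<psi> \<and> (\<forall>c\<in>H2. slantB \<phi> c = slantHV \<psi> c)"
  then obtain \<psi> where eq: "\<And>c. c \<in> H2 \<Longrightarrow> slantB \<phi> c = slantHV \<psi> c" by blast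
  define a where "a = fourier \<phi>"
  define b where "b = fourier \<psi>"
  have E: "a (2*n - 2*i) = b (2*n - i)" if "n \<ge> 0" "i \<ge> 0" for n i
  proof -
    have "slantB \<phi> (ed (2*i)) n = slantHV \<psi> (ed (2*i)) n" using eq[OF ed_H2] that by simp
    then show ?thesis using slantB_ed slantHV_ed_even that unfolding a_def b_def by simp
  qed
  have O: "a (2*n - (2*i+1)) = b (2*n - (-i-1))" if "n \<ge> 0" "i \<ge> 0" for n i
  proof -
    have "slantB \<phi> (ed (2*i+1)) n = slantHV \<psi> (ed (2*i+1)) n" using eq[OF ed_H2] that by simp
    then show ?thesis using slantB_ed slantHV_ed_odd that unfolding a_def b_def by simp
  qed
  have ev: "a (2*k) = a (2*k - 2)" for k
  proof -
    define N where "N = max k 0"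
    have N: "N \<ge> 0" "N \<ge> k" unfolding N_def by auto
    have 1: "a (2*N - 2*(N-k)) = b (2*N - (N-k))" using E[of N "N-k"] N by simp
    have 2: "a (2*(N+1) - 2*(N+2-k)) = b (2*(N+1) - (N+2-k))" using E[of "N+1" "N+2-k"] N by simp
    have i1: "2*N - 2*(N-k) = 2*k" "2*N - (N-k) = N + k" by simp_all
    have i2: "2*(N+1) - 2*(N+2-k) = 2*k - 2" "2*(N+1) - (N+2-k) = N + k" by simp_all
    show ?thesis using 1 2 unfolding i1 i2 by simp
  qed
  have od: "a (2*l + 1) = a (2*l + 7)" for l
  proof -
    define N where "N = \<bar>l\<bar> + 3"
    have N: "N \<ge> 0" "N \<ge> l + 3" unfolding N_def by auto
    have 1: "a (2*N - (2*(N-l-1)+1)) = b (2*N - (-(N-l-1)-1))" using O[of N "N-l-1"] N by simp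
    have 2: "a (2*(N+1) - (2*(N-l-3)+1)) = b (2*(N+1) - (-(N-l-3)-1))" using O[of "N+1" "N-l-3"] N by simp
    have i1a: "2*N - (2*(N-l-1)+1) = 2*l+1" by (simp add: algebra_simps)
    have i1b: "2*N - (-(N-l-1)-1) = 3*N - l" by (simp add: algebra_simps)
    have i2a: "2*(N+1) - (2*(N-l-3)+1) = 2*l+7" by (simp add: algebra_simps)
    have i2b: "2*(N+1) - (-(N-l-3)-1) = 3*N - l" by (simp add: algebra_simps)
    note i1 = i1a i1b and i2 = i2a i2b
    show ?thesis using 1 2 unfolding i1 i2 by simp
  qed
  define f where "f t = \<phi> (cis t)" for t
  obtain C where fm: "f \<in> borel_measurable LM" and C: "AE t in LM. norm (f t) \<le> C"
    using assms unfolding Linf_def circ_meas_def f_def by blast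
  have finLM: "finite_measure LM" by (rule finite_measure_lebesgue_on) simp
  have fi: "integrable LM f" by (rule finite_measure.integrable_const_bound[OF finLM C fm])
  define I where "I k = (\<integral>t. f t * cis (- (of_int k * t)) \<partial>LM)" for k
  have aI: "a k = complex_of_real (1 / (2*pi)) * I k" for k
    unfolding a_def fourier_def I_def f_def circ_meas_def by simp
  have cne: "complex_of_real (1 / (2*pi)) \<noteq> 0" by simp
  have evI: "I (2*k) = I (2*k - 2)" for k using ev[of k] cne unfolding aI by simp
  have odI: "I (2*l + 1) = I (2*l + 7)" for l using od[of l] cne unfolding aI by simp
  define P where "P t = 1 * cis (of_int 0 * t) + (-1) * cis (of_int 2 * t) + ((-1) * cis (of_int 6 * t) + 1 * cis (of_int 8 * t))" for t
  have TP: "trigp P" unfolding P_def by (intro trigp.ta trigp.tb)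
  have Fi: "integrable LM (\<lambda>t. f t * P t)" using int_trig[OF fi TP] .
  have orthF: "(\<integral>t. f t * P t * cis (- (of_int n * t)) \<partial>LM) = 0" for n :: int
  proof -
    have Ti: "integrable LM (\<lambda>t. f t * cis (- (of_int k * t)))" for k :: int
    proof -
      have "trigp (\<lambda>t. 1 * cis (of_int (-k) * t))" by (rule trigp.tb)
      then show ?thesis using int_trig[OF fi] by simp
    qed
    have pw: "f t * P t * cis (- (of_int n * t)) =
       ((f t * cis (- (of_int n * t)) - f t * cis (- (of_int (n-2) * t)))
       - f t * cis (- (of_int (n-6) * t))) + f t * cis (- (of_int (n-8) * t))" for t
      unfolding P_def by (simp add: cis_mult algebra_simps)
    have "(\<integral>t. f t * P t * cis (- (of_int n * t)) \<partial>LM) = I n - I (n-2) - I (n-6) + I (n-8)"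
      unfolding pw I_def using Ti[of n] Ti[of "n-2"] Ti[of "n-6"] Ti[of "n-8"] by simp
    also have "\<dots> = 0"
    proof (cases "even n")
      case True
      then obtain k where k: "n = 2*k" by (metis evenE)
      have "I n = I (n-2)" using evI[of k] k by simp
      moreover have "I (n-6) = I (n-8)" using evI[of "k-3"] k by (simp add: algebra_simps)
      ultimately show ?thesis by simp
    next
      case False
      then obtain l where l: "n = 2*l + 1" by (metis oddE)
      have "I n = I (n-6)" using odI[of "l-3"] l by (simp add: algebra_simps)
      moreover have "I (n-2) = I (n-8)" using odI[of "l-4"] l by (simp add: algebra_simps)
      ultimately show ?thesis by simp
    qed
    finally show ?thesis .
  qed
  have AEF: "AE t in LM. f t * P t = 0"
    by (rule uniqueness[OF Fi]) (use orthF in simp)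
  define X where "X = range (\<lambda>k::int. of_int k * (2*pi) / 6)"
  have "countable X" unfolding X_def by simp
  then have "X \<in> null_sets lborel" by (rule countable_imp_null_set_lborel)
  then have "AE t in lborel. t \<notin> X" by (rule AE_not_in)
  then have "AE t in lebesgue. t \<notin> X" by (rule AE_completion)
  then have AEX: "AE t in LM. t \<notin> X" by (subst AE_restrict_space_iff) (auto elim!: eventually_mono)
  have Pnz: "P t \<noteq> 0" if "t \<notin> X" for t
  proof
    assume P0: "P t = 0"
    have "P t = (1 - cis (2*t)) * (1 - cis (6*t))" unfolding P_def by (simp add: cis_mult algebra_simps)
    then have "cis (2*t) = 1 \<or> cis (6*t) = 1" using P0 by simp
    then have "cis (6*t) = 1"
    proof
      assume "cis (2*t) = 1"
      then have "cis (2*t) ^ 3 = 1" by simp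
      moreover have "cis (2*t) ^ 3 = cis (6*t)" unfolding Complex.DeMoivre by simp
      ultimately show "cis (6*t) = 1" by simp
    qed
    then have "exp (\<i> * complex_of_real (6*t)) = 1" by (simp add: cis_conv_exp)
    then obtain k :: int where "6*t = of_int (2*k) * pi" unfolding exp_eq_1 by auto
    then have "t = of_int k * (2*pi) / 6" by simp
    then show False using that unfolding X_def by auto
  qed
  have "AE t in LM. f t = 0" using AEF AEX by eventually_elim (use Pnz in auto)
  then show "AE t in circ_meas. \<phi> (cis t) = 0" unfolding circ_meas_def f_def .
next
  assume ae: "AE t in circ_meas. \<phi> (cis t) = 0"
  have f0: "fourier \<phi> n = 0" for n
  proof -
    have "AE t in circ_meas. \<phi> (cis t) * cis (- (of_int n * t)) = 0" using ae by (auto elim!: eventually_mono)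
    then show ?thesis unfolding fourier_def using integral_eq_zero_AE by (metis mult_zero_right)
  qed
  have z0: "fourier (\<lambda>z. 0) n = 0" for n unfolding fourier_def by simp
  have L0: "Linf (\<lambda>z. 0)" unfolding Linf_def by auto
  have M1: "Mult \<phi> c = (\<lambda>n. 0)" for c
    unfolding Mult_def f0 by (rule ext, rule infsum_0) simp
  have M2: "Mult (\<lambda>z. 0) c = (\<lambda>n. 0)" for c
    unfolding Mult_def z0 by (rule ext, rule infsum_0) simp
  have "slantB \<phi> c = slantHV (\<lambda>z. 0) c" for c
    unfolding slantB_def slantHV_def M1 M2 Proj_def Wop_def by simp
  then show "\<exists>\<psi>. Linf \<psi> \<and> (\<forall>c\<in>H2. slantB \<phi> c = slantHV \<psi> c)" using L0 by blast
qed

end
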